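(* For every integer $n>24$, the generalized Petersen graph $GP(n,4)$ is not $1$-distance-balanced.
   Context: For a connected graph $G$ and $x,y\in V(G)$, $d_G(x,y)$ denotes the distance. Let $W_{xy}=\{w\in V(G): d_G(w,x)<d_G(w,y)\}$. $G$ is called $\ell$-distance-balanced if $|W_{xy}|=|W_{yx}|$ for every pair $x,y\in V(G)$ with $d_G(x,y)=\ell$. For integers $n\ge 3$ and $1\le k<n/2$, the generalized Petersen graph $GP(n,k)$ has vertex set $\{u_i: i\in\mathbb{Z}_n\}\cup\{v_i: i\in\mathbb{Z}_n\}$ and edge set $\{u_iu_{i+1}: i\in\mathbb{Z}_n\}\cup\{v_iv_{i+k}: i\in\mathbb{Z}_n\}\cup\{u_iv_i: i\in\mathbb{Z}_n\}$. *)

theory Defs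
  imports Main
begin

text \<open>Generic notions for a graph given by a vertex set Vs and a symmetric
adjacency relation E (edges only between vertices of Vs).\<close>

definition gdist :: "('a \<Rightarrow> 'a \<Rightarrow> bool) \<Rightarrow> 'a \<Rightarrow> 'a \<Rightarrow> nat" where
  "gdist E x y = (LEAST m. (E ^^ m) x y)"

definition Wset :: "'a set \<Rightarrow> ('a \<Rightarrow> 'a \<Rightarrow> bool) \<Rightarrow> 'a \<Rightarrow> 'a \<Rightarrow> 'a set" where
  "Wset Vs E x y = {w \<in> Vs. gdist E w x < gdist E w y}"

definition distance_balanced :: "'a set \<Rightarrow> ('a \<Rightarrow> 'a \<Rightarrow> bool) \<Rightarrow> nat \<Rightarrow> bool" where
  "distance_balanced Vs E l \<longleftrightarrow>
     (\<forall>x\<in>Vs. \<forall>y\<in>Vs. gdist E x y = l \<longrightarrow> card (Wset Vs E x y) = card (Wset Vs E y x))"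

text \<open>Generalized Petersen graph GP(n,k); indices of Z_n are represented by 0..n-1.\<close>

datatype gpv = U nat | V nat

definition gp_verts :: "nat \<Rightarrow> gpv set" where
  "gp_verts n = {U i | i. i < n} \<union> {V i | i. i < n}"

definition gp_adj :: "nat \<Rightarrow> nat \<Rightarrow> gpv \<Rightarrow> gpv \<Rightarrow> bool" where
  "gp_adj n k a b \<longleftrightarrow>
     (\<exists>i<n. (a, b) \<in> {(U i, U ((i + 1) mod n)), (U ((i + 1) mod n), U i),
                       (V i, V ((i + k) mod n)), (V ((i + k) mod n), V i),
                       (U i, V i), (V i, U i)})"

end

theory Submission imports Defs begin

definition idx :: "nat \<Rightarrow> int \<Rightarrow> nat" where "idx n x = nat (x mod int n)"

lemma idx_lt: "0 < n \<Longrightarrow> idx n x < n"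
  unfolding idx_def by (simp add: nat_less_iff)

lemma idx_eq_iff: "0 < n \<Longrightarrow> idx n x = idx n y \<longleftrightarrow> int n dvd (x - y)"
proof -
  assume n: "0 < n"
  have "x mod int n \<ge> 0" "y mod int n \<ge> 0" using n by simp_all
  then show ?thesis unfolding idx_def by (simp add: eq_nat_nat_iff mod_eq_dvd_iff)
qed

lemma idx_int: "i < n \<Longrightarrow> idx n (int i) = i"
  unfolding idx_def by (simp add: zmod_int)

lemma idx_dvd: "0 < n \<Longrightarrow> int n dvd (int (idx n x) - x)"
proof -
  assume n: "0 < n"
  have "int (idx n x) = x mod int n" unfolding idx_def using n by simp
  moreover have "x mod int n - x = - (int n * (x div int n))" by (simp add: minus_mod_eq_mult_div[symmetric])
  ultimately show ?thesis by simp
qed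

lemma idx_char: "0 < n \<Longrightarrow> i < n \<Longrightarrow> int n dvd (x - int i) \<Longrightarrow> idx n x = i"
  by (metis idx_eq_iff idx_int)

lemma mod_idx: "0 < n \<Longrightarrow> (i + c) mod n = idx n (int i + int c)"
proof -
  have "int i + int c = int (i + c)" by simp
  then show ?thesis unfolding idx_def by (simp only: zmod_int[symmetric] nat_int)
qed

lemma gp_sym: "gp_adj n k a b = gp_adj n k b a"
  unfolding gp_adj_def by blast

lemma relpowp_sym: "(gp_adj n k ^^ m) a b \<Longrightarrow> (gp_adj n k ^^ m) b a"
proof (induction m arbitrary: a b)
  case 0 then show ?case by simp
next
  case (Suc m)
  from Suc.prems obtain y where "(gp_adj n k ^^ m) a y" "gp_adj n k y b" by (rule relpowp_Suc_E)
  then show ?case using Suc.IH gp_sym relpowp_Suc_I2 by metis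
qed

lemma adjU: "0 < n \<Longrightarrow> gp_adj n 4 (U (idx n x)) (U (idx n (x + 1)))"
proof -
  assume n: "0 < n"
  let ?i = "idx n x"
  have "(?i + 1) mod n = idx n (x+1)"
  proof -
    have "(?i + 1) mod n = idx n (int ?i + int 1)" by (rule mod_idx[OF n])
    also have "\<dots> = idx n (x+1)" unfolding idx_eq_iff[OF n] using idx_dvd[OF n, of x] by simp
    finally show ?thesis .
  qed
  then show ?thesis unfolding gp_adj_def using idx_lt[OF n, of x] by force
qed

lemma idx_shift: "0 < n \<Longrightarrow> idx n x = idx n y \<Longrightarrow> idx n (x + c) = idx n (y + c)"
  by (simp add: idx_eq_iff)

lemma mod_shift: "0 < n \<Longrightarrow> (i + c) mod n = idx n (int i + int c)"
  by (rule mod_idx)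

lemma adj_char:
  assumes n: "0 < n" and a: "gp_adj n 4 a b"
  shows "\<exists>x. (a = U (idx n x) \<and> b = U (idx n (x+1))) \<or> (b = U (idx n x) \<and> a = U (idx n (x+1)))
          \<or> (a = V (idx n x) \<and> b = V (idx n (x+4))) \<or> (b = V (idx n x) \<and> a = V (idx n (x+4)))
          \<or> (a = U (idx n x) \<and> b = V (idx n x)) \<or> (b = U (idx n x) \<and> a = V (idx n x))"
proof -
  from a obtain i where i: "i < n" and
    c: "(a, b) \<in> {(U i, U ((i + 1) mod n)), (U ((i + 1) mod n), U i),
                       (V i, V ((i + 4) mod n)), (V ((i + 4) mod n), V i),
                       (U i, V i), (V i, U i)}" unfolding gp_adj_def by blast
  have e1: "(i + 1) mod n = idx n (int i + 1)" using mod_shift[OF n, of i 1] by simp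
  have e4: "(i + 4) mod n = idx n (int i + 4)" using mod_shift[OF n, of i 4] by simp
  have e0: "i = idx n (int i)" using idx_int[OF i] by simp
  show ?thesis using c e1 e4 e0 by (metis empty_iff insert_iff prod.inject)
qed

lemma adj_intro:
  assumes n: "0 < n"
  shows "gp_adj n 4 (U (idx n x)) (U (idx n (x+1)))" "gp_adj n 4 (U (idx n (x+1))) (U (idx n x))"
    "gp_adj n 4 (V (idx n x)) (V (idx n (x+4)))" "gp_adj n 4 (V (idx n (x+4))) (V (idx n x))"
    "gp_adj n 4 (U (idx n x)) (V (idx n x))" "gp_adj n 4 (V (idx n x)) (U (idx n x))"
proof -
  let ?i = "idx n x"
  have i: "?i < n" by (rule idx_lt[OF n])
  have e1: "(?i + 1) mod n = idx n (x+1)"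
    using mod_shift[OF n, of ?i 1] idx_shift[OF n, of "int ?i" x 1] idx_int[OF i] by simp
  have e4: "(?i + 4) mod n = idx n (x+4)"
    using mod_shift[OF n, of ?i 4] idx_shift[OF n, of "int ?i" x 4] idx_int[OF i] by simp
  show "gp_adj n 4 (U (idx n x)) (U (idx n (x+1)))" unfolding gp_adj_def using i e1 by force
  show "gp_adj n 4 (U (idx n (x+1))) (U (idx n x))" unfolding gp_adj_def using i e1 by force
  show "gp_adj n 4 (V (idx n x)) (V (idx n (x+4)))" unfolding gp_adj_def using i e4 by force
  show "gp_adj n 4 (V (idx n (x+4))) (V (idx n x))" unfolding gp_adj_def using i e4 by force
  show "gp_adj n 4 (U (idx n x)) (V (idx n x))" unfolding gp_adj_def using i by force
  show "gp_adj n 4 (V (idx n x)) (U (idx n x))" unfolding gp_adj_def using i by force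
qed

lemma walkU:
  assumes n: "0 < n"
  shows "(gp_adj n 4 ^^ k) (U (idx n x)) (U (idx n (x + int k))) \<and> (gp_adj n 4 ^^ k) (U (idx n x)) (U (idx n (x - int k)))"
proof (induction k arbitrary: x)
  case 0 then show ?case by simp
next
  case (Suc k)
  have a: "(gp_adj n 4 ^^ k) (U (idx n (x+1))) (U (idx n (x + 1 + int k)))"
    and b: "(gp_adj n 4 ^^ k) (U (idx n (x-1+1))) (U (idx n (x - 1 + 1 - int k)))"
    using Suc.IH by (fastforce, metis diff_add_cancel)
  have c: "gp_adj n 4 (U (idx n (x-1+1))) (U (idx n (x-1)))" by (rule adj_intro(2)[OF n])
  show ?case
  proof
    show "(gp_adj n 4 ^^ Suc k) (U (idx n x)) (U (idx n (x + int (Suc k))))"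
      using relpowp_Suc_I2[where P="gp_adj n 4", OF adj_intro(1)[OF n] a] by (simp add: add_ac)
    have "(gp_adj n 4 ^^ k) (U (idx n (x-1))) (U (idx n (x - 1 - int k)))" using Suc.IH by blast
    then show "(gp_adj n 4 ^^ Suc k) (U (idx n x)) (U (idx n (x - int (Suc k))))"
      using relpowp_Suc_I2[where P="gp_adj n 4", OF c] by (simp add: algebra_simps)
  qed
qed

lemma walkV:
  assumes n: "0 < n"
  shows "(gp_adj n 4 ^^ k) (V (idx n x)) (V (idx n (x + 4 * int k))) \<and> (gp_adj n 4 ^^ k) (V (idx n x)) (V (idx n (x - 4 * int k)))"
proof (induction k arbitrary: x)
  case 0 then show ?case by simp
next
  case (Suc k)
  have a: "(gp_adj n 4 ^^ k) (V (idx n (x+4))) (V (idx n (x + 4 + 4 * int k)))"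
    using Suc.IH by blast
  have c: "gp_adj n 4 (V (idx n (x-4+4))) (V (idx n (x-4)))" by (rule adj_intro(4)[OF n])
  show ?case
  proof
    show "(gp_adj n 4 ^^ Suc k) (V (idx n x)) (V (idx n (x + 4 * int (Suc k))))"
      using relpowp_Suc_I2[where P="gp_adj n 4", OF adj_intro(3)[OF n] a] by (simp add: algebra_simps)
    have "(gp_adj n 4 ^^ k) (V (idx n (x-4))) (V (idx n (x - 4 - 4 * int k)))" using Suc.IH by blast
    then show "(gp_adj n 4 ^^ Suc k) (V (idx n x)) (V (idx n (x - 4 * int (Suc k))))"
      using relpowp_Suc_I2[where P="gp_adj n 4", OF c] by (simp add: algebra_simps)
  qed
qed

lemma walkUA: "0 < n \<Longrightarrow> (gp_adj n 4 ^^ nat \<bar>A\<bar>) (U (idx n x)) (U (idx n (x + A)))"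
proof (cases "A \<ge> 0")
  case True
  assume n: "0 < n"
  show ?thesis using walkU[OF n, of "nat \<bar>A\<bar>" x] True by simp
next
  case False
  assume n: "0 < n"
  show ?thesis using walkU[OF n, of "nat \<bar>A\<bar>" x] False by simp
qed

lemma walkVB: "0 < n \<Longrightarrow> (gp_adj n 4 ^^ nat \<bar>B\<bar>) (V (idx n x)) (V (idx n (x + 4 * B)))"
proof (cases "B \<ge> 0")
  case True
  assume n: "0 < n"
  show ?thesis using walkV[OF n, of "nat \<bar>B\<bar>" x] True by simp
next
  case False
  assume n: "0 < n"
  show ?thesis using walkV[OF n, of "nat \<bar>B\<bar>" x] False by simp
qed

lemma idx0: "0 < n \<Longrightarrow> idx n 0 = 0"
  unfolding idx_def by simp

lemma pathVU: "0 < n \<Longrightarrow> (gp_adj n 4 ^^ (nat \<bar>A\<bar> + nat \<bar>B\<bar> + 1)) (V 0) (U (idx n (A + 4 * B)))"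
proof -
  assume n: "0 < n"
  have 1: "(gp_adj n 4 ^^ nat \<bar>B\<bar>) (V 0) (V (idx n (4 * B)))" using walkVB[OF n, of B 0] idx0[OF n] by simp
  have 2: "gp_adj n 4 (V (idx n (4 * B))) (U (idx n (4 * B)))" by (rule adj_intro(6)[OF n])
  have 3: "(gp_adj n 4 ^^ nat \<bar>A\<bar>) (U (idx n (4 * B))) (U (idx n (A + 4 * B)))"
    using walkUA[OF n, of A "4 * B"] by (simp add: add_ac)
  have "(gp_adj n 4 ^^ Suc (nat \<bar>B\<bar>)) (V 0) (U (idx n (4 * B)))" using relpowp_Suc_I[where P="gp_adj n 4", OF 1 2] .
  from relpowp_trans[where R="gp_adj n 4", OF this 3] show ?thesis by (simp add: add_ac)
qed

lemma pathUU: "0 < n \<Longrightarrow> (gp_adj n 4 ^^ nat \<bar>A\<bar>) (U 0) (U (idx n A))"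
  using walkUA[of n A 0] idx0[of n] by simp

lemma pathUV: "0 < n \<Longrightarrow> (gp_adj n 4 ^^ Suc (nat \<bar>A\<bar>)) (U 0) (V (idx n A))"
proof -
  assume n: "0 < n"
  show ?thesis using relpowp_Suc_I[where P="gp_adj n 4", OF pathUU[OF n, of A] adj_intro(5)[OF n, of A]] .
qed

definition Rinv :: "nat \<Rightarrow> nat \<Rightarrow> gpv \<Rightarrow> bool" where
  "Rinv n m w \<longleftrightarrow> (\<exists>A B. (w = U (idx n (A + 4 * B)) \<and> \<bar>A\<bar> + \<bar>B\<bar> + (if B = 0 then 0 else 2) \<le> int m)
      \<or> (w = V (idx n (A + 4 * B)) \<and> \<bar>A\<bar> + \<bar>B\<bar> + 1 \<le> int m))"

lemma Rinv_step:
  assumes n: "0 < n" and R: "Rinv n m a" and e: "gp_adj n 4 a b"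
  shows "Rinv n (Suc m) b"
proof -
  from R obtain A B where AB: "(a = U (idx n (A + 4 * B)) \<and> \<bar>A\<bar> + \<bar>B\<bar> + (if B = 0 then 0 else 2) \<le> int m)
      \<or> (a = V (idx n (A + 4 * B)) \<and> \<bar>A\<bar> + \<bar>B\<bar> + 1 \<le> int m)" unfolding Rinv_def by blast
  from adj_char[OF n e] obtain x where x: "(a = U (idx n x) \<and> b = U (idx n (x+1))) \<or> (b = U (idx n x) \<and> a = U (idx n (x+1)))
          \<or> (a = V (idx n x) \<and> b = V (idx n (x+4))) \<or> (b = V (idx n x) \<and> a = V (idx n (x+4)))
          \<or> (a = U (idx n x) \<and> b = V (idx n x)) \<or> (b = U (idx n x) \<and> a = V (idx n x))" by blast
  have sh: "idx n y = idx n (A + 4 * B) \<Longrightarrow> idx n (y + c) = idx n ((A + c) + 4 * B)" for y c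
    using idx_shift[OF n, of y "A + 4 * B" c] by (simp add: algebra_simps)
  have sh4: "idx n y = idx n (A + 4 * B) \<Longrightarrow> idx n (y + 4 * c) = idx n (A + 4 * (B + c))" for y c
    using idx_shift[OF n, of y "A + 4 * B" "4 * c"] by (simp add: algebra_simps)
  from x show ?thesis
  proof (elim disjE conjE)
    assume "a = U (idx n x)" "b = U (idx n (x+1))"
    with AB have "idx n x = idx n (A + 4 * B)" "\<bar>A\<bar> + \<bar>B\<bar> + (if B = 0 then 0 else 2) \<le> int m" by auto
    with sh[of x 1] \<open>b = _\<close> show ?thesis unfolding Rinv_def
      by (intro exI[of _ "A + 1"] exI[of _ B]) auto
  next
    assume "b = U (idx n x)" "a = U (idx n (x+1))"
    with AB have "idx n (x+1) = idx n (A + 4 * B)" "\<bar>A\<bar> + \<bar>B\<bar> + (if B = 0 then 0 else 2) \<le> int m" by auto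
    with sh[of "x+1" "-1"] \<open>b = _\<close> show ?thesis unfolding Rinv_def
      by (intro exI[of _ "A - 1"] exI[of _ B]) auto
  next
    assume "a = V (idx n x)" "b = V (idx n (x+4))"
    with AB have "idx n x = idx n (A + 4 * B)" "\<bar>A\<bar> + \<bar>B\<bar> + 1 \<le> int m" by auto
    with sh4[of x 1] \<open>b = _\<close> show ?thesis unfolding Rinv_def
      by (intro exI[of _ A] exI[of _ "B + 1"]) auto
  next
    assume "b = V (idx n x)" "a = V (idx n (x+4))"
    with AB have "idx n (x+4) = idx n (A + 4 * B)" "\<bar>A\<bar> + \<bar>B\<bar> + 1 \<le> int m" by auto
    with sh4[of "x+4" "-1"] \<open>b = _\<close> show ?thesis unfolding Rinv_def
      by (intro exI[of _ A] exI[of _ "B - 1"]) auto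
  next
    assume "a = U (idx n x)" "b = V (idx n x)"
    with AB have "idx n x = idx n (A + 4 * B)" "\<bar>A\<bar> + \<bar>B\<bar> + (if B = 0 then 0 else 2) \<le> int m" by auto
    with \<open>b = _\<close> show ?thesis unfolding Rinv_def
      by (intro exI[of _ A] exI[of _ B]) (auto split: if_splits)
  next
    assume "b = U (idx n x)" "a = V (idx n x)"
    with AB have "idx n x = idx n (A + 4 * B)" "\<bar>A\<bar> + \<bar>B\<bar> + 1 \<le> int m" by auto
    with \<open>b = _\<close> show ?thesis unfolding Rinv_def
      by (intro exI[of _ A] exI[of _ B]) auto
  qed
qed

lemma Rinv_path: "0 < n \<Longrightarrow> (gp_adj n 4 ^^ m) (U 0) w \<Longrightarrow> Rinv n m w"
proof (induction m arbitrary: w)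
  case 0
  then have "w = U (idx n (0 + 4 * 0))" using idx0 by simp
  then show ?case unfolding Rinv_def by fastforce
next
  case (Suc m)
  from Suc.prems(2) obtain y where "(gp_adj n 4 ^^ m) (U 0) y" "gp_adj n 4 y w" by (rule relpowp_Suc_E)
  then show ?case using Suc.IH Suc.prems(1) Rinv_step by blast
qed

lemma gd_le: "(gp_adj n 4 ^^ k) s w \<Longrightarrow> gdist (gp_adj n 4) w s \<le> k"
  unfolding gdist_def by (rule Least_le) (rule relpowp_sym)

lemma gd_path: "(gp_adj n 4 ^^ k) s w \<Longrightarrow> (gp_adj n 4 ^^ (gdist (gp_adj n 4) w s)) s w"
proof -
  assume "(gp_adj n 4 ^^ k) s w"
  then have "(gp_adj n 4 ^^ k) w s" by (rule relpowp_sym)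
  then have "(gp_adj n 4 ^^ (gdist (gp_adj n 4) w s)) w s" unfolding gdist_def by (rule LeastI)
  then show ?thesis by (rule relpowp_sym)
qed

lemma reachU: "0 < n \<Longrightarrow> i < n \<Longrightarrow> (gp_adj n 4 ^^ i) (U 0) (U i)"
  using pathUU[of n "int i"] idx_int[of i n] by simp

lemma reachV: "0 < n \<Longrightarrow> i < n \<Longrightarrow> (gp_adj n 4 ^^ Suc i) (U 0) (V i)"
  using pathUV[of n "int i"] idx_int[of i n] by simp

lemma dvd_big: "int n dvd x \<Longrightarrow> x \<noteq> 0 \<Longrightarrow> \<bar>x\<bar> \<ge> int n"
proof -
  assume d: "int n dvd x" and x0: "x \<noteq> 0"
  from d obtain k where k: "x = int n * k" by (rule dvdE)
  with x0 have "k \<noteq> 0" by simp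
  then have k1: "1 \<le> \<bar>k\<bar>" by simp
  have "\<bar>x\<bar> = int n * \<bar>k\<bar>" using k by (simp add: abs_mult)
  also have "\<dots> \<ge> int n * 1" by (rule mult_left_mono[OF k1]) simp
  finally show ?thesis by simp
qed

lemma F_a:
  assumes n: "24 < n" and i1: "4 \<le> i" and i2: "i + 4 \<le> n"
  shows "gdist (gp_adj n 4) (U i) (V 0) < gdist (gp_adj n 4) (U i) (U 0)"
proof -
  have n0: "0 < n" using n by simp
  have il: "i < n" using i1 i2 by simp
  define D where "D = gdist (gp_adj n 4) (U i) (U 0)"
  have "(gp_adj n 4 ^^ D) (U 0) (U i)" unfolding D_def by (rule gd_path[OF reachU[OF n0 il]])
  then have "Rinv n D (U i)" by (rule Rinv_path[OF n0])
  then obtain A B where iA: "i = idx n (A + 4 * B)" and c: "\<bar>A\<bar> + \<bar>B\<bar> + (if B = 0 then 0 else 2) \<le> int D"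
    unfolding Rinv_def by auto
  show ?thesis
  proof (cases "B = 0")
    case False
    have "gdist (gp_adj n 4) (U i) (V 0) \<le> nat \<bar>A\<bar> + nat \<bar>B\<bar> + 1"
      using gd_le[OF pathVU[OF n0, of A B]] iA by simp
    then show ?thesis using c False unfolding D_def by simp
  next
    case True
    have "idx n A = idx n (int i)" using iA True idx_int[OF il] by simp
    then have dv: "int n dvd (A - int i)" using idx_eq_iff[OF n0] by blast
    have A4: "\<bar>A\<bar> \<ge> 4"
    proof (cases "A - int i = 0")
      case True then show ?thesis using i1 by simp
    next
      case False
      have "\<bar>A - int i\<bar> \<ge> int n" by (rule dvd_big[OF dv False])
      then show ?thesis using i2 i1 by linarith
    qed
    define q where "q = \<bar>A\<bar> div 4"
    define r where "r = \<bar>A\<bar> mod 4"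
    have qr: "\<bar>A\<bar> = 4 * q + r" "0 \<le> r" "r < 4" unfolding q_def r_def by simp_all
    have q1: "q \<ge> 1" using qr A4 by linarith
    define B' where "B' = (if A \<ge> 0 then q else - q)"
    define A' where "A' = A - 4 * B'"
    have lenA: "\<bar>A'\<bar> = r" "\<bar>B'\<bar> = q" unfolding A'_def B'_def using qr q1 by (auto split: abs_split)
    have "A' + 4 * B' = A" unfolding A'_def by simp
    then have "gdist (gp_adj n 4) (U i) (V 0) \<le> nat \<bar>A'\<bar> + nat \<bar>B'\<bar> + 1"
      using gd_le[OF pathVU[OF n0, of A' B']] iA True by simp
    then show ?thesis using c True lenA qr q1 unfolding D_def by simp
  qed
qed

lemma F_b:
  assumes n: "24 < n" and b: "\<bar>B0\<bar> \<le> 3"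
  shows "gdist (gp_adj n 4) (V (idx n (4 * B0))) (V 0) < gdist (gp_adj n 4) (V (idx n (4 * B0))) (U 0)"
proof -
  have n0: "0 < n" using n by simp
  define j where "j = idx n (4 * B0)"
  have jl: "j < n" unfolding j_def by (rule idx_lt[OF n0])
  define D where "D = gdist (gp_adj n 4) (V j) (U 0)"
  have "(gp_adj n 4 ^^ D) (U 0) (V j)" unfolding D_def by (rule gd_path[OF reachV[OF n0 jl]])
  then have "Rinv n D (V j)" by (rule Rinv_path[OF n0])
  then obtain A B where jA: "j = idx n (A + 4 * B)" and c: "\<bar>A\<bar> + \<bar>B\<bar> + 1 \<le> int D"
    unfolding Rinv_def by auto
  have dv: "int n dvd (A + 4 * B - 4 * B0)" using jA idx_eq_iff[OF n0] unfolding j_def by metis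
  have big: "\<bar>A\<bar> + \<bar>B\<bar> \<ge> \<bar>B0\<bar>"
  proof (cases "A + 4 * B - 4 * B0 = 0")
    case True then show ?thesis by linarith
  next
    case False
    have "\<bar>A + 4 * B - 4 * B0\<bar> \<ge> int n" by (rule dvd_big[OF dv False])
    then show ?thesis using n b by linarith
  qed
  have "gdist (gp_adj n 4) (V j) (V 0) \<le> nat \<bar>B0\<bar>"
    using gd_le[OF walkVB[OF n0, of B0 0]] idx0[OF n0] unfolding j_def by simp
  then show ?thesis using c big unfolding D_def j_def by simp
qed

lemma F_c:
  assumes n: "24 < n"
  shows "gdist (gp_adj n 4) (U 3) (V 0) \<le> gdist (gp_adj n 4) (U 3) (U 0)"
proof -
  have n0: "0 < n" using n by simp
  have il: "3 < n" using n by simp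
  define D where "D = gdist (gp_adj n 4) (U 3) (U 0)"
  have "(gp_adj n 4 ^^ D) (U 0) (U 3)" unfolding D_def by (rule gd_path[OF reachU[OF n0 il]])
  then have "Rinv n D (U 3)" by (rule Rinv_path[OF n0])
  then obtain A B where iA: "3 = idx n (A + 4 * B)" and c: "\<bar>A\<bar> + \<bar>B\<bar> + (if B = 0 then 0 else 2) \<le> int D"
    unfolding Rinv_def by auto
  have D3: "D \<ge> 3"
  proof (cases "B = 0")
    case False then show ?thesis using c by simp
  next
    case True
    have "idx n A = idx n (int 3)" using iA True idx_int[OF il] by simp
    then have dv: "int n dvd (A - 3)" using idx_eq_iff[OF n0] by simp
    have "\<bar>A\<bar> \<ge> 3"
    proof (cases "A - 3 = 0")
      case True then show ?thesis by simp
    next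
      case False
      have "\<bar>A - 3\<bar> \<ge> int n" by (rule dvd_big[OF dv False])
      then show ?thesis using n by linarith
    qed
    then show ?thesis using c True by simp
  qed
  have "idx n (-1 + 4 * 1) = 3" using idx_int[OF il] by simp
  then have "gdist (gp_adj n 4) (U 3) (V 0) \<le> 3"
    using gd_le[OF pathVU[OF n0, of "-1" 1]] by simp
  then show ?thesis using D3 unfolding D_def by simp
qed

theorem proposition3p1:
  fixes n :: nat
  assumes "n > 24"
  shows "\<not> distance_balanced (gp_verts n) (gp_adj n 4) 1"
proof
  assume db: "distance_balanced (gp_verts n) (gp_adj n 4) 1"
  have n: "24 < n" using assms .
  have n0: "0 < n" using n by simp
  let ?E = "gp_adj n 4"
  let ?Vs = "gp_verts n"
  have Vs: "?Vs = U ` {..<n} \<union> V ` {..<n}" unfolding gp_verts_def by auto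
  have cVs: "card ?Vs = 2 * n" unfolding Vs
    by (subst card_Un_disjoint) (auto simp: card_image inj_on_def)
  have fVs: "finite ?Vs" unfolding Vs by simp
  define SU where "SU = U ` {4..n-4}"
  define SV where "SV = (\<lambda>B. V (idx n (4 * B))) ` {-3..3::int}"
  have cSU: "card SU = n - 7" unfolding SU_def by (simp add: card_image inj_on_def)
  have injSV: "inj_on (\<lambda>B. V (idx n (4 * B))) {-3..3::int}"
  proof (rule inj_onI)
    fix x y :: int assume x: "x \<in> {-3..3}" and y: "y \<in> {-3..3}" and e: "V (idx n (4 * x)) = V (idx n (4 * y))"
    then have dv: "int n dvd (4 * x - 4 * y)" using idx_eq_iff[OF n0] by simp
    show "x = y"
    proof (rule ccontr)
      assume "x \<noteq> y"
      then have "\<bar>4 * x - 4 * y\<bar> \<ge> int n" using dvd_big[OF dv] by simp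
      moreover have "-3 \<le> x" "x \<le> 3" "-3 \<le> y" "y \<le> 3" using x y by auto
      ultimately show False using n by linarith
    qed
  qed
  have cSV: "card SV = 7" unfolding SV_def using card_image[OF injSV] by simp
  have disj: "SU \<inter> SV = {}" unfolding SU_def SV_def by auto
  define S2 where "S2 = SU \<union> SV"
  have fS2: "finite S2" unfolding S2_def SU_def SV_def by simp
  have cS2: "card S2 = n" unfolding S2_def using card_Un_disjoint[OF _ _ disj] cSU cSV n
    unfolding SU_def SV_def by simp
  define W12 where "W12 = Wset ?Vs ?E (U 0) (V 0)"
  define W21 where "W21 = Wset ?Vs ?E (V 0) (U 0)"
  have S2W: "S2 \<subseteq> W21"
  proof
    fix w assume "w \<in> S2"
    then consider (u) i where "w = U i" "4 \<le> i" "i \<le> n - 4" | (v) B where "w = V (idx n (4 * B))" "\<bar>B\<bar> \<le> 3"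
      unfolding S2_def SU_def SV_def by auto
    then show "w \<in> W21"
    proof cases
      case u
      then have "w \<in> ?Vs" unfolding Vs using n by auto
      then show ?thesis using F_a[OF n, of i] u n unfolding W21_def Wset_def by simp
    next
      case v
      then have "w \<in> ?Vs" unfolding Vs using idx_lt[OF n0] by auto
      then show ?thesis using F_b[OF n v(2)] v unfolding W21_def Wset_def by simp
    qed
  qed
  have W12sub: "W12 \<subseteq> ?Vs - (S2 \<union> {U 3})"
  proof
    fix w assume w: "w \<in> W12"
    then have "w \<notin> W21" unfolding W12_def W21_def Wset_def by auto
    then have "w \<notin> S2" using S2W by blast
    moreover have "w \<noteq> U 3" using w F_c[OF n] unfolding W12_def Wset_def by auto
    moreover have "w \<in> ?Vs" using w unfolding W12_def Wset_def by auto
    ultimately show "w \<in> ?Vs - (S2 \<union> {U 3})" by blast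
  qed
  have sub: "S2 \<union> {U 3} \<subseteq> ?Vs" using S2W n unfolding W21_def Wset_def Vs by auto
  have U3: "U 3 \<notin> S2" unfolding S2_def SU_def SV_def by auto
  have fS3: "finite (S2 \<union> {U 3})" using fS2 by simp
  have cS3: "card (S2 \<union> {U 3}) = n + 1" using fS2 U3 cS2 by simp
  have cD: "card (?Vs - (S2 \<union> {U 3})) = card ?Vs - card (S2 \<union> {U 3})"
    by (rule card_Diff_subset[OF fS3 sub])
  have cm: "card W12 \<le> card (?Vs - (S2 \<union> {U 3}))"
    by (rule card_mono[OF finite_Diff[OF fVs] W12sub])
  have c12: "card W12 \<le> n - 1"
    using cm cD cS3 cVs by linarith
  have fW21: "finite W21" unfolding W21_def Wset_def using fVs by simp
  have c21: "card W21 \<ge> n"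
    using card_mono[OF fW21 S2W] cS2 by simp
  have g1: "gdist ?E (U 0) (V 0) = 1"
    unfolding gdist_def
  proof (rule Least_equality)
    show "(?E ^^ 1) (U 0) (V 0)" unfolding gp_adj_def using n0 by force
    show "1 \<le> y" if "(?E ^^ y) (U 0) (V 0)" for y
    proof -
      have "y \<noteq> 0"
      proof
        assume "y = 0"
        with that show False by simp
      qed
      then show ?thesis by simp
    qed
  qed
  have "U 0 \<in> ?Vs" "V 0 \<in> ?Vs" unfolding Vs using n0 by auto
  then have "card (Wset ?Vs ?E (U 0) (V 0)) = card (Wset ?Vs ?E (V 0) (U 0))"
  proof -
    have "\<forall>x\<in>?Vs. \<forall>y\<in>?Vs. gdist ?E x y = 1 \<longrightarrow> card (Wset ?Vs ?E x y) = card (Wset ?Vs ?E y x)"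
      using db unfolding distance_balanced_def by simp
    from this \<open>U 0 \<in> ?Vs\<close> have h1: "\<forall>y\<in>?Vs. gdist ?E (U 0) y = 1 \<longrightarrow> card (Wset ?Vs ?E (U 0) y) = card (Wset ?Vs ?E y (U 0))"
      by (rule bspec)
    from h1 \<open>V 0 \<in> ?Vs\<close> have h2: "gdist ?E (U 0) (V 0) = 1 \<longrightarrow> card (Wset ?Vs ?E (U 0) (V 0)) = card (Wset ?Vs ?E (V 0) (U 0))"
      by (rule bspec)
    from h2 g1 show ?thesis by (rule mp)
  qed
  then have "card W12 = card W21" unfolding W12_def W21_def .
  then show False using c12 c21 n by simp
qed

end
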